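(* Let $m \in \mathbb{N}$ and let $G$ be a subdivision of the star $K_{1,m}$ (i.e., a graph obtained from $K_{1,m}$ by replacing its edges with internally disjoint paths of arbitrary positive lengths). If $m=1$, then the total graph $T(G)$ is equitably $k$-choosable for every $k \geq 3$. If $m \geq 2$, then $T(G)$ is equitably $k$-choosable for every $k \geq m+1$.
   Context: All graphs are finite and simple. The total graph $T(G)$ of a graph $G$ has vertex set $V(G)\cup E(G)$, two elements being adjacent in $T(G)$ iff they are adjacent or incident in $G$. A $k$-assignment $L$ for a graph $G$ assigns to each vertex $v$ a set $L(v)$ of exactly $k$ colors. An equitable $L$-coloring of $G$ is a proper coloring $f$ of $G$ with $f(v)\in L(v)$ for all $v$, such that no color is used on more than $\lceil |V(G)|/k\rceil$ vertices. $G$ is equitably $k$-choosable if it has an equitable $L$-coloring for every $k$-assignment $L$. *)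

theory Defs
  imports Complex_Main
begin

text \<open>Simple graphs are given by a vertex set V and an edge set E of 2-element subsets.
  The graphs considered here are built from paths, so they are automatically finite and simple.\<close>

definition path_edges :: "'a list \<Rightarrow> 'a set set" where
  "path_edges xs = {{xs ! i, xs ! Suc i} | i. Suc i < length xs}"

definition star_subdivision :: "'a set \<Rightarrow> 'a set set \<Rightarrow> nat \<Rightarrow> bool" where
  "star_subdivision V E m \<longleftrightarrow>
     (\<exists>c P. (\<forall>i<m. distinct (P i) \<and> length (P i) \<ge> 2 \<and> hd (P i) = c)
         \<and> (\<forall>i<m. \<forall>j<m. i \<noteq> j \<longrightarrow> set (P i) \<inter> set (P j) = {c})
         \<and> V = insert c (\<Union>i<m. set (P i))
         \<and> E = (\<Union>i<m. path_edges (P i)))"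

text \<open>Total graph T(G): vertex set V \<union> E (as a disjoint sum), adjacency = adjacent or incident.\<close>
definition total_vertices :: "'a set \<Rightarrow> 'a set set \<Rightarrow> ('a + 'a set) set" where
  "total_vertices V E = Inl ` V \<union> Inr ` E"

fun total_adj :: "'a set set \<Rightarrow> ('a + 'a set) \<Rightarrow> ('a + 'a set) \<Rightarrow> bool" where
  "total_adj E (Inl u) (Inl v) = ({u, v} \<in> E)"
| "total_adj E (Inl u) (Inr e) = (u \<in> e)"
| "total_adj E (Inr e) (Inl u) = (u \<in> e)"
| "total_adj E (Inr e) (Inr f) = (e \<noteq> f \<and> e \<inter> f \<noteq> {})"

definition equitably_choosable :: "'v set \<Rightarrow> ('v \<Rightarrow> 'v \<Rightarrow> bool) \<Rightarrow> nat \<Rightarrow> bool" where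
  "equitably_choosable W adj k \<longleftrightarrow>
     (\<forall>L :: 'v \<Rightarrow> nat set. (\<forall>v\<in>W. finite (L v) \<and> card (L v) = k) \<longrightarrow>
        (\<exists>f. (\<forall>v\<in>W. f v \<in> L v)
           \<and> (\<forall>u\<in>W. \<forall>v\<in>W. adj u v \<longrightarrow> f u \<noteq> f v)
           \<and> (\<forall>col. card {v\<in>W. f v = col} \<le> nat \<lceil>real (card W) / real k\<rceil>)))"

end

theory Submission
  imports Defs
begin



lemma greedy_aux:
  "\<And>S d F. finite S \<Longrightarrow> card S = n \<Longrightarrow> card S \<le> k \<Longrightarrow>
   (\<forall>x\<in>S. finite (F x) \<and> card (F x) \<le> d x) \<Longrightarrow>
   (\<forall>x\<in>S. finite (Lst x) \<and> card (Lst x) = k) \<Longrightarrow>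
   (\<forall>v\<ge>1. card {x\<in>S. v \<le> d x} \<le> k - v) \<Longrightarrow>
   \<exists>g. (\<forall>x\<in>S. g x \<in> Lst x \<and> g x \<notin> F x) \<and> inj_on g S"
proof (induction n)
  case 0
  then show ?case by auto
next
  case (Suc n)
  note fin = Suc.prems(1)
  have ne: "S \<noteq> {}" using Suc.prems(2) by auto
  have "Max (d ` S) \<in> d ` S" using fin ne by simp
  then obtain x0 where x0a: "x0 \<in> S" "d x0 = Max (d ` S)" by (metis imageE)
  have x0: "x0 \<in> S" "\<forall>y\<in>S. d y \<le> d x0"
    using x0a fin by auto
  have dk: "d x0 < k"
  proof (cases "d x0 = 0")
    case True
    have "card S \<ge> 1" using Suc.prems(2) by simp
    then show ?thesis using True Suc.prems(3) by simp
  next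
    case False
    have "x0 \<in> {x\<in>S. d x0 \<le> d x}" using x0 by simp
    moreover have "finite {x\<in>S. d x0 \<le> d x}" using fin by simp
    ultimately have "card {x\<in>S. d x0 \<le> d x} \<ge> 1"
      by (metis One_nat_def Suc_leI card_gt_0_iff empty_iff)
    moreover have "card {x\<in>S. d x0 \<le> d x} \<le> k - d x0" using Suc.prems(6) False by simp
    ultimately show ?thesis by simp
  qed
  have c1: "card (F x0) \<le> d x0" and fx0: "finite (F x0)" using Suc.prems(4) x0(1) by blast+
  have c2: "card (Lst x0) = k" using Suc.prems(5) x0(1) by blast
  have "\<not> Lst x0 \<subseteq> F x0"
  proof
    assume "Lst x0 \<subseteq> F x0"
    then have "card (Lst x0) \<le> card (F x0)" by (rule card_mono[OF fx0])
    then show False using c1 c2 dk by linarith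
  qed
  then obtain col where col: "col \<in> Lst x0" "col \<notin> F x0" by blast
  define S' where "S' = S - {x0}"
  define F' where "F' = (\<lambda>y. insert col (F y))"
  define d' where "d' = (\<lambda>y. Suc (d y))"
  have cS': "card S' = n" using Suc.prems(2) x0(1) fin by (simp add: S'_def)
  have "\<exists>g. (\<forall>x\<in>S'. g x \<in> Lst x \<and> g x \<notin> F' x) \<and> inj_on g S'"
  proof (rule Suc.IH)
    show "finite S'" using fin by (simp add: S'_def)
    show "card S' = n" by (rule cS')
    show "card S' \<le> k" using cS' Suc.prems(2,3) by simp
    show "\<forall>x\<in>S'. finite (F' x) \<and> card (F' x) \<le> d' x"
      using Suc.prems(4) by (auto simp: S'_def F'_def d'_def card_insert_if)
    show "\<forall>x\<in>S'. finite (Lst x) \<and> card (Lst x) = k" using Suc.prems(5) by (auto simp: S'_def)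
    show "\<forall>v\<ge>1. card {x\<in>S'. v \<le> d' x} \<le> k - v"
    proof (intro allI impI)
      fix v :: nat assume v: "1 \<le> v"
      show "card {x\<in>S'. v \<le> d' x} \<le> k - v"
      proof (cases "v = 1")
        case True
        have "{x\<in>S'. v \<le> d' x} = S'" using True by (auto simp: d'_def)
        then show ?thesis using cS' Suc.prems(2,3) True by simp
      next
        case False
        then obtain w where w: "v = Suc w" "w \<ge> 1" using v by (cases v) auto
        have eq: "{x\<in>S'. v \<le> d' x} = {x\<in>S. w \<le> d x} - {x0}"
          using w by (auto simp: S'_def d'_def)
        show ?thesis
        proof (cases "w \<le> d x0")
          case True
          have "x0 \<in> {x\<in>S. w \<le> d x}" using True x0 by simp
          hence "card ({x\<in>S. w \<le> d x} - {x0}) = card {x\<in>S. w \<le> d x} - 1"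
            using fin by simp
          moreover have "card {x\<in>S. w \<le> d x} \<le> k - w" using Suc.prems(6) w by simp
          ultimately show ?thesis using eq w by simp
        next
          case False
          have "{x\<in>S. w \<le> d x} = {}"
          proof (rule ccontr)
            assume "{x\<in>S. w \<le> d x} \<noteq> {}"
            then obtain x where "x \<in> S" "w \<le> d x" by blast
            then have "w \<le> d x0" using x0(2) le_trans by blast
            then show False using False by simp
          qed
          then have "{x\<in>S'. v \<le> d' x} = {}" unfolding eq by blast
          then show ?thesis by (metis card.empty zero_le)
        qed
      qed
    qed
  qed
  then obtain g' where g': "\<forall>x\<in>S'. g' x \<in> Lst x \<and> g' x \<notin> F' x" "inj_on g' S'" by blast
  define g where "g = g'(x0 := col)"
  have "\<forall>x\<in>S. g x \<in> Lst x \<and> g x \<notin> F x"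
    using g'(1) col by (auto simp: g_def S'_def F'_def)
  moreover have "inj_on g S"
  proof -
    have "S = insert x0 S'" using x0 by (auto simp: S'_def)
    moreover have "col \<notin> g' ` S'" using g'(1) by (auto simp: F'_def)
    moreover have "x0 \<notin> S'" by (simp add: S'_def)
    ultimately show ?thesis using g'(2) by (auto simp: g_def inj_on_def)
  qed
  ultimately show ?case by blast
qed

lemma greedy:
  assumes "finite S" "card S \<le> k"
   "\<forall>x\<in>S. finite (F x) \<and> card (F x) \<le> d x"
   "\<forall>x\<in>S. finite (Lst x) \<and> card (Lst x) = k"
   "\<forall>v\<ge>1. card {x\<in>S. v \<le> d x} \<le> k - v"
  shows "\<exists>g. (\<forall>x\<in>S. g x \<in> Lst x \<and> g x \<notin> F x) \<and> inj_on g S"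
  using greedy_aux[OF assms(1) refl assms(2-5)] .




lemma ceil_step:
  assumes "k \<ge> 1" "n \<ge> k"
  shows "nat \<lceil>real (n - k) / real k\<rceil> + 1 = nat \<lceil>real n / real k\<rceil>"
proof -
  have "real n / real k = real (n - k) / real k + 1"
    using assms by (simp add: of_nat_diff field_simps)
  hence "\<lceil>real n / real k\<rceil> = \<lceil>real (n - k) / real k\<rceil> + 1" by simp
  moreover have "\<lceil>real (n - k) / real k\<rceil> \<ge> 0"
  proof -
    have "0 \<le> real (n - k) / real k" by simp
    then show ?thesis by linarith
  qed
  ultimately show ?thesis by linarith
qed

lemma card_le_one_inj:
  assumes "inj_on g S" "finite S"
  shows "card {x\<in>S. g x = col} \<le> 1"
proof -
  have "\<forall>x\<in>{x\<in>S. g x = col}. \<forall>y\<in>{x\<in>S. g x = col}. x = y"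
    using assms(1) by (auto simp: inj_on_def)
  then show ?thesis using card_le_Suc0_iff_eq[of "{x\<in>S. g x = col}"] assms(2) by auto
qed

lemma KK:
  assumes fin: "finite W" and sym: "\<forall>u v. adj u v \<longrightarrow> adj v u"
  and irr: "\<forall>u. \<not> adj u u"
  and S: "S \<subseteq> W" "card S = k" "k \<ge> 1"
  and rest: "equitably_choosable (W - S) adj k"
  and cnt: "\<forall>v\<ge>1. card {x\<in>S. v \<le> card {y\<in>W-S. adj x y}} \<le> k - v"
  shows "equitably_choosable W adj k"
  unfolding equitably_choosable_def
proof (intro allI impI)
  fix Lst :: "_ \<Rightarrow> nat set"
  assume L: "\<forall>v\<in>W. finite (Lst v) \<and> card (Lst v) = k"
  obtain f where f: "\<forall>v\<in>W-S. f v \<in> Lst v"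
     "\<forall>u\<in>W-S. \<forall>v\<in>W-S. adj u v \<longrightarrow> f u \<noteq> f v"
     "\<forall>col. card {v\<in>W-S. f v = col} \<le> nat \<lceil>real (card (W-S)) / real k\<rceil>"
  proof -
    have LS: "\<forall>v\<in>W-S. finite (Lst v) \<and> card (Lst v) = k" using L by blast
    show ?thesis using rest[unfolded equitably_choosable_def, THEN spec[of _ Lst], THEN mp, OF LS] that by blast
  qed
  have finS: "finite S" using fin S(1) finite_subset by blast
  obtain g where g: "\<forall>x\<in>S. g x \<in> Lst x \<and> g x \<notin> f ` {y\<in>W-S. adj x y}" "inj_on g S"
  proof -
    have "\<exists>g. (\<forall>x\<in>S. g x \<in> Lst x \<and> g x \<notin> f ` {y\<in>W-S. adj x y}) \<and> inj_on g S"
    proof (rule greedy[where d = "\<lambda>x. card {y\<in>W-S. adj x y}"])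
      show "finite S" by (rule finS)
      show "card S \<le> k" using S by simp
      show "\<forall>x\<in>S. finite (f ` {y\<in>W-S. adj x y}) \<and> card (f ` {y\<in>W-S. adj x y}) \<le> card {y\<in>W-S. adj x y}"
        using fin by (auto intro: card_image_le)
      show "\<forall>x\<in>S. finite (Lst x) \<and> card (Lst x) = k" using L S(1) by blast
      show "\<forall>v\<ge>1. card {x\<in>S. v \<le> card {y\<in>W-S. adj x y}} \<le> k - v" by (rule cnt)
    qed
    then show ?thesis using that by blast
  qed
  define h where "h = (\<lambda>x. if x \<in> S then g x else f x)"
  have p1: "\<forall>v\<in>W. h v \<in> Lst v" using f(1) g(1) by (auto simp: h_def)
  have p2: "\<forall>u\<in>W. \<forall>v\<in>W. adj u v \<longrightarrow> h u \<noteq> h v"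
  proof (intro ballI impI)
    fix u v assume uv: "u \<in> W" "v \<in> W" "adj u v"
    show "h u \<noteq> h v"
    proof (cases "u \<in> S")
      case True
      show ?thesis
      proof (cases "v \<in> S")
        case True
        have "u \<noteq> v" using irr uv(3) by metis
        then show ?thesis using \<open>u \<in> S\<close> True g(2) by (auto simp: h_def inj_on_def)
      next
        case False
        have "f v \<in> f ` {y\<in>W-S. adj u y}" using False uv by auto
        then show ?thesis using g(1) \<open>u \<in> S\<close> False by (auto simp: h_def)
      qed
    next
      case False
      show ?thesis
      proof (cases "v \<in> S")
        case True
        have "f u \<in> f ` {y\<in>W-S. adj v y}" using False uv sym by auto
        then show ?thesis using g(1) \<open>v \<in> S\<close> False by (auto simp: h_def)
      next
        case False
        then show ?thesis using f(2) \<open>u \<notin> S\<close> uv by (auto simp: h_def)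
      qed
    qed
  qed
  have p3: "\<forall>col. card {v\<in>W. h v = col} \<le> nat \<lceil>real (card W) / real k\<rceil>"
  proof
    fix col
    have "{v\<in>W. h v = col} = {v\<in>W-S. f v = col} \<union> {x\<in>S. g x = col}"
      using S(1) by (auto simp: h_def)
    hence "card {v\<in>W. h v = col} \<le> card {v\<in>W-S. f v = col} + card {x\<in>S. g x = col}"
      by (metis card_Un_le)
    also have "\<dots> \<le> nat \<lceil>real (card (W-S)) / real k\<rceil> + 1"
      using f(3) card_le_one_inj[OF g(2) finS] by (meson add_mono)
    also have "\<dots> = nat \<lceil>real (card W) / real k\<rceil>"
    proof -
      have "card (W - S) = card W - k" using S fin finS by (simp add: card_Diff_subset)
      moreover have "card W \<ge> k" using S fin card_mono by metis
      ultimately show ?thesis using ceil_step[OF S(3)] by simp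
    qed
    finally show "card {v\<in>W. h v = col} \<le> nat \<lceil>real (card W) / real k\<rceil>" .
  qed
  show "\<exists>f. (\<forall>v\<in>W. f v \<in> Lst v) \<and> (\<forall>u\<in>W. \<forall>v\<in>W. adj u v \<longrightarrow> f u \<noteq> f v) \<and>
           (\<forall>col. card {v\<in>W. f v = col} \<le> nat \<lceil>real (card W) / real k\<rceil>)"
    using p1 p2 p3 by blast
qed

lemma base:
  assumes fin: "finite W" and irr: "\<forall>u. \<not> adj u u" and k: "card W \<le> k" "k \<ge> 1"
  shows "equitably_choosable W adj k"
  unfolding equitably_choosable_def
proof (intro allI impI)
  fix Lst :: "_ \<Rightarrow> nat set"
  assume L: "\<forall>v\<in>W. finite (Lst v) \<and> card (Lst v) = k"
  have "\<exists>g. (\<forall>x\<in>W. g x \<in> Lst x \<and> g x \<notin> {}) \<and> inj_on g W"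
    by (rule greedy[where d = "\<lambda>x. 0"]) (use fin k L in auto)
  then obtain g where g: "\<forall>x\<in>W. g x \<in> Lst x" "inj_on g W" by blast
  have p2: "\<forall>u\<in>W. \<forall>v\<in>W. adj u v \<longrightarrow> g u \<noteq> g v"
    using g(2) irr by (metis inj_on_def)
  have p3: "\<forall>col. card {v\<in>W. g v = col} \<le> nat \<lceil>real (card W) / real k\<rceil>"
  proof
    fix col
    show "card {v\<in>W. g v = col} \<le> nat \<lceil>real (card W) / real k\<rceil>"
    proof (cases "{v\<in>W. g v = col} = {}")
      case True then show ?thesis by (metis card.empty zero_le)
    next
      case False
      then have "card W \<ge> 1" using fin by (metis (no_types, lifting) One_nat_def Suc_leI card_gt_0_iff empty_Collect_eq empty_iff)
      then have "real (card W) / real k > 0" using k by simp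
      then have "nat \<lceil>real (card W) / real k\<rceil> \<ge> 1" by linarith
      then show ?thesis using card_le_one_inj[OF g(2) fin, of col] by linarith
    qed
  qed
  show "\<exists>f. (\<forall>v\<in>W. f v \<in> Lst v) \<and> (\<forall>u\<in>W. \<forall>v\<in>W. adj u v \<longrightarrow> f u \<noteq> f v) \<and>
           (\<forall>col. card {v\<in>W. f v = col} \<le> nat \<lceil>real (card W) / real k\<rceil>)"
    using g(1) p2 p3 by blast
qed

lemma transfer:
  assumes ec: "equitably_choosable A adjA k" and bij: "bij_betw h A B" and finA: "finite A"
  and adj: "\<forall>x\<in>A. \<forall>y\<in>A. adjB (h x) (h y) \<longrightarrow> adjA x y"
  shows "equitably_choosable B adjB k"
  unfolding equitably_choosable_def
proof (intro allI impI)
  fix Lst :: "_ \<Rightarrow> nat set"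
  assume L: "\<forall>v\<in>B. finite (Lst v) \<and> card (Lst v) = k"
  have LA: "\<forall>v\<in>A. finite (Lst (h v)) \<and> card (Lst (h v)) = k"
    using L bij by (auto simp: bij_betw_def)
  obtain f where f: "\<forall>v\<in>A. f v \<in> Lst (h v)"
     "\<forall>u\<in>A. \<forall>v\<in>A. adjA u v \<longrightarrow> f u \<noteq> f v"
     "\<forall>col. card {v\<in>A. f v = col} \<le> nat \<lceil>real (card A) / real k\<rceil>"
    using ec[unfolded equitably_choosable_def, THEN spec[of _ "\<lambda>v. Lst (h v)"], THEN mp, OF LA] by blast
  define i where "i = inv_into A h"
  have i1: "\<forall>y\<in>B. i y \<in> A \<and> h (i y) = y"
    using bij by (auto simp: i_def bij_betw_def inv_into_into f_inv_into_f)
  define f' where "f' = (\<lambda>y. f (i y))"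
  have p1: "\<forall>v\<in>B. f' v \<in> Lst v" using f(1) i1 by (metis f'_def)
  have p2: "\<forall>u\<in>B. \<forall>v\<in>B. adjB u v \<longrightarrow> f' u \<noteq> f' v"
    using f(2) i1 adj unfolding f'_def by metis
  have p3: "\<forall>col. card {v\<in>B. f' v = col} \<le> nat \<lceil>real (card B) / real k\<rceil>"
  proof
    fix col
    have "{v\<in>B. f' v = col} \<subseteq> h ` {v\<in>A. f v = col}"
    proof
      fix y assume "y \<in> {v\<in>B. f' v = col}"
      then show "y \<in> h ` {v\<in>A. f v = col}" using i1 unfolding f'_def by (metis (mono_tags, lifting) image_iff mem_Collect_eq)
    qed
    moreover have "finite (h ` {v\<in>A. f v = col})" using finA by simp
    ultimately have "card {v\<in>B. f' v = col} \<le> card (h ` {v\<in>A. f v = col})" by (rule card_mono[rotated])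
    also have "\<dots> \<le> card {v\<in>A. f v = col}" by (rule card_image_le) (use finA in simp)
    also have "\<dots> \<le> nat \<lceil>real (card A) / real k\<rceil>" using f(3) by blast
    also have "card A = card B" using bij by (rule bij_betw_same_card)
    finally show "card {v\<in>B. f' v = col} \<le> nat \<lceil>real (card B) / real k\<rceil>" .
  qed
  show "\<exists>f. (\<forall>v\<in>B. f v \<in> Lst v) \<and> (\<forall>u\<in>B. \<forall>v\<in>B. adjB u v \<longrightarrow> f u \<noteq> f v) \<and>
           (\<forall>col. card {v\<in>B. f v = col} \<le> nat \<lceil>real (card B) / real k\<rceil>)"
    using p1 p2 p3 by blast
qed




fun Hadj :: "(nat \<times> nat) option \<Rightarrow> (nat \<times> nat) option \<Rightarrow> bool" where
  "Hadj None None = False"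
| "Hadj None (Some (i,a)) = (a \<le> 2)"
| "Hadj (Some (i,a)) None = (a \<le> 2)"
| "Hadj (Some (i,a)) (Some (j,b)) = ((i = j \<and> a \<noteq> b \<and> a \<le> b + 2 \<and> b \<le> a + 2) \<or> (i \<noteq> j \<and> a = 1 \<and> b = 1))"

definition HW :: "nat \<Rightarrow> (nat \<Rightarrow> nat) \<Rightarrow> (nat \<times> nat) option set" where
  "HW m L = insert None (Some ` {(i,a). i < m \<and> 1 \<le> a \<and> a \<le> L i})"

lemma Hadj_sym: "\<forall>u v. Hadj u v \<longrightarrow> Hadj v u"
proof (intro allI impI)
  fix u v assume "Hadj u v" then show "Hadj v u"
    by (cases u; cases v) auto
qed

lemma Hadj_irr: "\<forall>u. \<not> Hadj u u"
proof
  fix u show "\<not> Hadj u u" by (cases u) auto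
qed

lemma sig_eq: "{(i,a). i < m \<and> 1 \<le> a \<and> a \<le> L i} = (SIGMA i:{..<m}. {1..L i})"
  by auto

lemma HW_finite: "finite (HW m L)"
  unfolding HW_def sig_eq by auto

lemma HW_card: "card (HW m L) = Suc (\<Sum>i<m. L i)"
proof -
  have "card (Some ` {(i,a). i < m \<and> 1 \<le> a \<and> a \<le> L i}) = card (SIGMA i:{..<m}. {1..L i})"
    unfolding sig_eq by (rule card_image) auto
  also have "\<dots> = (\<Sum>i<m. L i)" by (simp add: card_SigmaI)
  moreover have "finite (Some ` {(i,a). i < m \<and> 1 \<le> a \<and> a \<le> L i})"
    using HW_finite[of m L] unfolding HW_def by simp
  ultimately show ?thesis unfolding HW_def by simp
qed




definition TS :: "nat \<Rightarrow> (nat \<Rightarrow> nat) \<Rightarrow> (nat \<Rightarrow> nat) \<Rightarrow> (nat\<times>nat) set" where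
  "TS m L t = {(i,a). i < m \<and> L i - t i < a \<and> a \<le> L i}"

lemma card_ins_le: "finite A \<Longrightarrow> card (insert x A) \<le> Suc (card A)"
  by (simp add: card_insert_if)

lemma Some_img [simp]: "Some x \<in> Some ` A \<longleftrightarrow> x \<in> A" by auto

lemma TS_sub: "\<forall>i. t i \<le> L i \<Longrightarrow> HW m L - Some ` TS m L t = HW m (\<lambda>i. L i - t i)"
  by (auto simp: HW_def TS_def)

lemma TS_in: "Some ` TS m L t \<subseteq> HW m L"
  by (auto simp: HW_def TS_def)

lemma TS_sig: "TS m L t = (SIGMA i:{..<m}. {Suc (L i - t i)..L i})"
  by (auto simp: TS_def)

lemma TS_finite: "finite (TS m L t)"
  unfolding TS_sig by auto

lemma TS_card: "\<forall>i. t i \<le> L i \<Longrightarrow> card (Some ` TS m L t) = (\<Sum>i<m. t i)"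
proof -
  assume t: "\<forall>i. t i \<le> L i"
  have "card (Some ` TS m L t) = card (TS m L t)" by (rule card_image) auto
  also have "\<dots> = (\<Sum>i<m. card {Suc (L i - t i)..L i})" unfolding TS_sig by (simp add: card_SigmaI)
  also have "\<dots> = (\<Sum>i<m. t i)" using t by (intro sum.cong) auto
  finally show ?thesis .
qed

lemma N_first:
  assumes "i < m" "L i - t i = 0"
  shows "card {y\<in>HW m (\<lambda>i. L i - t i). Hadj (Some (i,1)) y} \<le> Suc (card {j. j<m \<and> t j < L j})"
proof -
  have sub: "{y\<in>HW m (\<lambda>i. L i - t i). Hadj (Some (i,1)) y} \<subseteq> insert None ((\<lambda>j::nat. Some (j,1::nat)) ` {j. j<m \<and> t j < L j})"
  proof
    fix y assume y: "y \<in> {y\<in>HW m (\<lambda>i. L i - t i). Hadj (Some (i,1)) y}"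
    show "y \<in> insert None ((\<lambda>j::nat. Some (j,1::nat)) ` {j. j<m \<and> t j < L j})"
    proof (cases y)
      case None then show ?thesis by simp
    next
      case (Some p)
      then obtain j b where p: "y = Some (j,b)" by (cases p) auto
      have "j < m \<and> 1 \<le> b \<and> b \<le> L j - t j" using y p by (simp add: HW_def)
      moreover have "Hadj (Some (i,1)) (Some (j,b))" using y p by simp
      ultimately have "j \<noteq> i \<and> b = 1" using assms by auto
      then have "t j < L j" "j < m" using \<open>j < m \<and> 1 \<le> b \<and> b \<le> L j - t j\<close> by auto
      then show ?thesis using p \<open>j \<noteq> i \<and> b = 1\<close> by blast
    qed
  qed
  moreover have c2: "card (insert None ((\<lambda>j::nat. Some (j,1::nat)) ` {j. j<m \<and> t j < L j})) \<le> Suc (card {j. j<m \<and> t j < L j})"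
  proof -
    have "card ((\<lambda>j::nat. Some (j,1::nat)) ` {j. j<m \<and> t j < L j}) \<le> card {j. j<m \<and> t j < L j}"
      by (rule card_image_le) simp
    moreover have c2: "card (insert None ((\<lambda>j::nat. Some (j,1::nat)) ` {j. j<m \<and> t j < L j})) \<le> Suc (card ((\<lambda>j::nat. Some (j,1::nat)) ` {j. j<m \<and> t j < L j}))"
      by (rule card_ins_le) simp
    ultimately show ?thesis by linarith
  qed
  moreover have fin: "finite (insert None ((\<lambda>j::nat. Some (j,1::nat)) ` {j. j<m \<and> t j < L j}))" by simp
  ultimately show ?thesis using card_mono[OF fin sub] by linarith
qed

lemma card2: "card {x::'a, y} \<le> 2" by (simp add: card_insert_if)

lemma N_mid:
  fixes M :: "nat \<Rightarrow> nat"
  assumes "i < m" "1 \<le> M i"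
  shows "card {y\<in>HW m M. Hadj (Some (i, Suc (M i))) y} \<le> 2"
proof -
  have sub: "{y\<in>HW m M. Hadj (Some (i, Suc (M i))) y} \<subseteq> {Some (i, M i), (if 2 \<le> M i then Some (i, M i - 1) else None)}"
  proof
    fix y assume y: "y \<in> {y\<in>HW m M. Hadj (Some (i, Suc (M i))) y}"
    show "y \<in> {Some (i, M i), (if 2 \<le> M i then Some (i, M i - 1) else None)}"
    proof (cases y)
      case None
      then have "Suc (M i) \<le> 2" using y by simp
      then show ?thesis using None by simp
    next
      case (Some p)
      then obtain j b where p: "y = Some (j,b)" by (cases p) auto
      have jm: "j < m \<and> 1 \<le> b \<and> b \<le> M j" using y p by (simp add: HW_def)
      have h: "Hadj (Some (i, Suc (M i))) (Some (j,b))" using y p by blast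
      then have "(i = j \<and> Suc (M i) \<noteq> b \<and> Suc (M i) \<le> b + 2 \<and> b \<le> Suc (M i) + 2) \<or> (i \<noteq> j \<and> Suc (M i) = 1 \<and> b = 1)"
        by (simp only: Hadj.simps)
      then have ij: "i = j" and bb: "M i \<le> b + 1" using assms(2) by auto
      have b2: "b \<le> M i" "1 \<le> b" using jm ij by auto
      show ?thesis
      proof (cases "b = M i")
        case True then show ?thesis using p ij by simp
      next
        case False
        then have "b = M i - 1" "2 \<le> M i" using bb b2 by auto
        then show ?thesis using p ij by simp
      qed
    qed
  qed
  have "card {y\<in>HW m M. Hadj (Some (i, Suc (M i))) y} \<le> card {Some (i, M i), (if 2 \<le> M i then Some (i, M i - 1) else None)}"
    by (rule card_mono[OF _ sub]) simp
  moreover have "card {Some (i, M i), (if 2 \<le> M i then Some (i, M i - 1) else None)} \<le> 2" by (rule card2)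
  ultimately show ?thesis by linarith
qed

lemma N_second:
  fixes M :: "nat \<Rightarrow> nat"
  assumes "i < m"
  shows "card {y\<in>HW m M. Hadj (Some (i, M i + 2)) y} \<le> 1"
proof -
  have sub: "{y\<in>HW m M. Hadj (Some (i, M i + 2)) y} \<subseteq> {if M i = 0 then None else Some (i, M i)}"
  proof
    fix y assume y: "y \<in> {y\<in>HW m M. Hadj (Some (i, M i + 2)) y}"
    show "y \<in> {if M i = 0 then None else Some (i, M i)}"
    proof (cases y)
      case None
      then have "M i + 2 \<le> 2" using y by simp
      then show ?thesis using None by simp
    next
      case (Some p)
      then obtain j b where p: "y = Some (j,b)" by (cases p) auto
      have jm: "j < m \<and> 1 \<le> b \<and> b \<le> M j" using y p by (simp add: HW_def)
      have h: "Hadj (Some (i, M i + 2)) (Some (j,b))" using y p by blast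
      then have "(i = j \<and> M i + 2 \<noteq> b \<and> M i + 2 \<le> b + 2 \<and> b \<le> M i + 2 + 2) \<or> (i \<noteq> j \<and> M i + 2 = 1 \<and> b = 1)"
        by (simp only: Hadj.simps)
      then have ij: "i = j" and bb: "M i \<le> b" by auto
      have "b \<le> M i" "1 \<le> b" using jm ij by auto
      then have "b = M i" "M i \<noteq> 0" using bb by auto
      then show ?thesis using p ij by simp
    qed
  qed
  have "card {y\<in>HW m M. Hadj (Some (i, M i + 2)) y} \<le> card {if M i = 0 then None else Some (i, M i)}"
    by (rule card_mono[OF _ sub]) simp
  then show ?thesis by simp
qed

lemma N_far:
  fixes M :: "nat \<Rightarrow> nat"
  assumes "M i + 3 \<le> a"
  shows "card {y\<in>HW m M. Hadj (Some (i, a)) y} = 0"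
proof -
  have "{y\<in>HW m M. Hadj (Some (i, a)) y} = {}"
  proof (rule ccontr)
    assume "{y\<in>HW m M. Hadj (Some (i, a)) y} \<noteq> {}"
    then obtain y where y: "y \<in> HW m M" "Hadj (Some (i, a)) y" by blast
    show False
    proof (cases y)
      case None
      then show False using y assms by simp
    next
      case (Some p)
      then obtain j b where p: "y = Some (j,b)" by (cases p) auto
      have jm: "j < m \<and> 1 \<le> b \<and> b \<le> M j" using y p by (simp add: HW_def)
      have h: "Hadj (Some (i, a)) (Some (j,b))" using y p by blast
      then have "(i = j \<and> a \<noteq> b \<and> a \<le> b + 2 \<and> b \<le> a + 2) \<or> (i \<noteq> j \<and> a = 1 \<and> b = 1)"
        by (simp only: Hadj.simps)
      then have ij: "i = j" and bb: "a \<le> b + 2" using assms by auto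
      have "b \<le> M i" using jm ij by auto
      then show False using bb assms by linarith
    qed
  qed
  then show ?thesis by (metis card.empty)
qed

lemma tail_cnt:
  fixes t L :: "nat \<Rightarrow> nat"
  assumes k: "m + 1 \<le> k" and t: "\<forall>i. t i \<le> L i" "(\<Sum>i<m. t i) = k" and g: "g < m" "3 \<le> t g"
  shows "\<forall>v\<ge>1. card {x\<in>Some ` TS m L t. v \<le> card {y\<in>HW m L - Some ` TS m L t. Hadj x y}} \<le> k - v"
proof (intro allI impI)
  fix v :: nat assume v1: "1 \<le> v"
  define M where "M = (\<lambda>i. L i - t i)"
  define b where "b = card {j. j<m \<and> t j < L j}"
  define e where "e = (\<lambda>(i,a). if a = Suc (M i) then (if M i = 0 then Suc b else 2) else if a = M i + 2 then 1 else (0::nat))"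
  have rest: "HW m L - Some ` TS m L t = HW m M" unfolding M_def using TS_sub[OF t(1)] .
  have dle: "\<forall>p\<in>TS m L t. card {y\<in>HW m M. Hadj (Some p) y} \<le> e p"
  proof
    fix p assume p: "p \<in> TS m L t"
    obtain i a where ia: "p = (i,a)" by (cases p)
    have ia2: "i < m" "M i < a" "a \<le> L i" using p ia by (auto simp: TS_def M_def)
    consider "a = Suc (M i) \<and> M i = 0" | "a = Suc (M i) \<and> M i \<noteq> 0" | "a = M i + 2" | "M i + 3 \<le> a"
      using ia2 by linarith
    then show "card {y\<in>HW m M. Hadj (Some p) y} \<le> e p"
    proof cases
      case 1
      have "card {y\<in>HW m (\<lambda>i. L i - t i). Hadj (Some (i,1)) y} \<le> Suc (card {j. j<m \<and> t j < L j})"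
        using N_first[of i m L t] ia2 1 unfolding M_def by simp
      then show ?thesis using 1 ia unfolding e_def b_def M_def by simp
    next
      case 2 then show ?thesis using N_mid[of i m M] ia ia2 by (simp add: e_def)
    next
      case 3 then show ?thesis using N_second[of i m M] ia ia2 by (simp add: e_def)
    next
      case 4 then show ?thesis using N_far[of M i a m] ia by (simp add: e_def)
    qed
  qed
  have finTS: "finite (TS m L t)" by (rule TS_finite)
  have step1: "card {x\<in>Some ` TS m L t. v \<le> card {y\<in>HW m L - Some ` TS m L t. Hadj x y}} \<le> card {p\<in>TS m L t. v \<le> e p}"
  proof -
    have sub: "{x\<in>Some ` TS m L t. v \<le> card {y\<in>HW m L - Some ` TS m L t. Hadj x y}} \<subseteq> Some ` {p\<in>TS m L t. v \<le> e p}"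
    proof
      fix x assume x: "x \<in> {x\<in>Some ` TS m L t. v \<le> card {y\<in>HW m L - Some ` TS m L t. Hadj x y}}"
      then obtain p where p: "x = Some p" "p \<in> TS m L t" by blast
      have "v \<le> card {y\<in>HW m M. Hadj (Some p) y}" using x p rest by simp
      moreover have "card {y\<in>HW m M. Hadj (Some p) y} \<le> e p" using dle p(2) by blast
      ultimately have "v \<le> e p" by linarith
      then show "x \<in> Some ` {p\<in>TS m L t. v \<le> e p}" using p by simp
    qed
    have "card {x\<in>Some ` TS m L t. v \<le> card {y\<in>HW m L - Some ` TS m L t. Hadj x y}} \<le> card (Some ` {p\<in>TS m L t. v \<le> e p})"
      by (rule card_mono[OF _ sub]) (use finTS in simp)
    also have "\<dots> = card {p\<in>TS m L t. v \<le> e p}" by (rule card_image) simp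
    finally show ?thesis .
  qed
  have "card {p\<in>TS m L t. v \<le> e p} \<le> k - v"
  proof -
    consider "v = 1" | "v = 2" | "3 \<le> v" using v1 by linarith
    then show ?thesis
    proof cases
      case 1
      have sub: "{p\<in>TS m L t. v \<le> e p} \<subseteq> (SIGMA i:{..<m}. {Suc (M i)..min (L i) (M i + 2)})"
      proof
        fix p assume p: "p \<in> {p\<in>TS m L t. v \<le> e p}"
        obtain i a where ia: "p = (i,a)" by (cases p)
        have "i < m" "M i < a" "a \<le> L i" using p ia by (auto simp: TS_def M_def)
        moreover have "a \<le> M i + 2"
        proof (rule ccontr)
          assume "\<not> a \<le> M i + 2"
          then have "e p = 0" using ia by (simp add: e_def)
          then show False using p 1 by simp
        qed
        ultimately show "p \<in> (SIGMA i:{..<m}. {Suc (M i)..min (L i) (M i + 2)})" using ia by auto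
      qed
      have "card {p\<in>TS m L t. v \<le> e p} \<le> card (SIGMA i:{..<m}. {Suc (M i)..min (L i) (M i + 2)})"
        by (rule card_mono[OF _ sub]) simp
      also have "\<dots> = (\<Sum>i<m. card {Suc (M i)..min (L i) (M i + 2)})" by (simp add: card_SigmaI)
      also have "\<dots> = (\<Sum>i<m. min (t i) 2)"
      proof (rule sum.cong)
        fix x assume "x \<in> {..<m}"
        have "t x \<le> L x" using t(1) by blast
        then show "card {Suc (M x)..min (L x) (M x + 2)} = min (t x) 2" by (simp add: M_def min_def; arith)
      qed simp
      also have "\<dots> < (\<Sum>i<m. t i)"
      proof (rule sum_strict_mono_ex1)
        show "\<exists>a\<in>{..<m}. min (t a) 2 < t a" using g by (intro bexI[of _ g]) auto
      qed auto
      finally show ?thesis using t(2) 1 by simp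
    next
      case 2
      define P where "P = {i\<in>{..<m}. 0 < t i}"
      have sub: "{p\<in>TS m L t. v \<le> e p} \<subseteq> (\<lambda>i. (i, Suc (M i))) ` P"
      proof
        fix p assume p: "p \<in> {p\<in>TS m L t. v \<le> e p}"
        obtain i a where ia: "p = (i,a)" by (cases p)
        have iaa: "i < m" "M i < a" "a \<le> L i" using p ia by (auto simp: TS_def M_def)
        have "a = Suc (M i)"
        proof (rule ccontr)
          assume "a \<noteq> Suc (M i)"
          then have "e p \<le> 1" using ia by (simp add: e_def)
          then show False using p 2 by simp
        qed
        moreover have "0 < t i" using iaa unfolding M_def by linarith
        ultimately show "p \<in> (\<lambda>i. (i, Suc (M i))) ` P" using ia iaa P_def by auto
      qed
      have c1: "card {p\<in>TS m L t. v \<le> e p} \<le> card P"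
      proof -
        have "card {p\<in>TS m L t. v \<le> e p} \<le> card ((\<lambda>i. (i, Suc (M i))) ` P)"
          by (rule card_mono[OF _ sub]) (simp add: P_def)
        also have "\<dots> \<le> card P" by (rule card_image_le) (simp add: P_def)
        finally show ?thesis .
      qed
      have "card P + 2 \<le> k"
      proof -
        have "(\<Sum>i<m. (if 0 < t i then 1 else 0) + (if i = g then 2 else 0)) \<le> (\<Sum>i<m. t i)"
          by (rule sum_mono) (use g in auto)
        moreover have "(\<Sum>i<m. (if 0 < t i then 1 else 0) + (if i = g then 2 else (0::nat))) = card P + 2"
        proof -
          have "(\<Sum>i<m. (if 0 < t i then 1 else (0::nat))) = card P"
            unfolding P_def by (simp add: sum.inter_filter[symmetric])
          moreover have "(\<Sum>i<m. (if i = g then 2 else (0::nat))) = 2" using g by simp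
          ultimately show ?thesis by (simp add: sum.distrib)
        qed
        ultimately show ?thesis using t(2) by simp
      qed
      then show ?thesis using c1 2 by simp
    next
      case 3
      define F where "F = {i\<in>{..<m}. 0 < t i \<and> M i = 0}"
      define B where "B = {j. j<m \<and> t j < L j}"
      have sub: "{p\<in>TS m L t. v \<le> e p} \<subseteq> (if v \<le> Suc b then (\<lambda>i. (i, 1::nat)) ` F else {})"
      proof
        fix p assume p: "p \<in> {p\<in>TS m L t. v \<le> e p}"
        obtain i a where ia: "p = (i,a)" by (cases p)
        have iaa: "i < m" "M i < a" "a \<le> L i" using p ia by (auto simp: TS_def M_def)
        have "a = Suc (M i) \<and> M i = 0 \<and> v \<le> Suc b"
        proof (rule ccontr)
          assume "\<not> (a = Suc (M i) \<and> M i = 0 \<and> v \<le> Suc b)"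
          then have "e p < v" using ia 3 by (auto simp: e_def)
          then show False using p by simp
        qed
        moreover have "0 < t i" using iaa unfolding M_def by linarith
        ultimately show "p \<in> (if v \<le> Suc b then (\<lambda>i. (i, 1::nat)) ` F else {})" using ia iaa F_def by auto
      qed
      show ?thesis
      proof (cases "v \<le> Suc b")
        case False
        then have "{p\<in>TS m L t. v \<le> e p} = {}" using sub by auto
        then show ?thesis by (metis card.empty zero_le)
      next
        case True
        have sub': "{p\<in>TS m L t. v \<le> e p} \<subseteq> (\<lambda>i. (i, 1::nat)) ` F" using sub True by simp
        have "card {p\<in>TS m L t. v \<le> e p} \<le> card ((\<lambda>i. (i, 1::nat)) ` F)"
          by (rule card_mono[OF _ sub']) (simp add: F_def)
        also have "\<dots> \<le> card F" by (rule card_image_le) (simp add: F_def)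
        finally have c1: "card {p\<in>TS m L t. v \<le> e p} \<le> card F" .
        have "F \<inter> B = {}" unfolding F_def B_def M_def by auto
        moreover have "F \<union> B \<subseteq> {..<m}" unfolding F_def B_def by auto
        moreover have fF: "finite F" and fB: "finite B" unfolding F_def B_def by auto
        ultimately have "card F + card B \<le> m"
        proof -
          assume a1: "F \<inter> B = {}" and a2: "F \<union> B \<subseteq> {..<m}"
          have "card (F \<union> B) = card F + card B" by (rule card_Un_disjoint[OF fF fB a1])
          moreover have "card (F \<union> B) \<le> card {..<m}" by (rule card_mono[OF _ a2]) simp
          ultimately show ?thesis by simp
        qed
        then have "card F + b \<le> m" unfolding b_def B_def .
        then show ?thesis using c1 True k by linarith
      qed
    qed
  qed
  then show "card {x\<in>Some ` TS m L t. v \<le> card {y\<in>HW m L - Some ` TS m L t. Hadj x y}} \<le> k - v"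
    using step1 by linarith
qed




lemma cstep_b:
  assumes k: "m + 1 = k" "3 \<le> k"
  shows "equitably_choosable (HW m (\<lambda>_. 2)) Hadj k"
proof -
  define W where "W = HW m (\<lambda>_. 2)"
  define S0 where "S0 = {None, Some (0::nat,1::nat), Some (0,2)}"
  define S1 where "S1 = Some ` (\<lambda>j. (j, 1::nat)) ` {1..<m-1}"
  define S where "S = S0 \<union> S1"
  have m2: "2 \<le> m" using k by simp
  have SW: "S \<subseteq> W" using m2 by (auto simp: S_def S0_def S1_def W_def HW_def)
  have finW: "finite W" unfolding W_def by (rule HW_finite)
  have cardW: "card W = Suc (2*m)" using HW_card[of m "\<lambda>_. 2"] by (simp add: W_def)
  have cS0: "card S0 = 3" by (simp add: S0_def)
  have cS1: "card S1 = m - 2"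
  proof -
    have "card S1 = card ((\<lambda>j. (j, 1::nat)) ` {1..<m-1})" unfolding S1_def
      by (rule card_image) simp
    also have "\<dots> = card {1..<m-1}" by (rule card_image) (simp add: inj_on_def)
    finally have "card S1 = card {1..<m-1}" .
    then show ?thesis by simp
  qed
  have dis: "S0 \<inter> S1 = {}" by (auto simp: S0_def S1_def)
  have cardS: "card S = k"
    unfolding S_def using card_Un_disjoint[of S0 S1] dis cS0 cS1 m2 k
    by (simp add: S0_def S1_def)
  have finS0: "finite S" using SW finW finite_subset by blast
  have "card (W - S) = card W - card S" by (rule card_Diff_subset[OF finS0 SW])
  then have cardR: "card (W - S) = k - 1" using cardW cardS k by simp
  have rest: "equitably_choosable (W - S) Hadj k"
    by (rule base) (use finW cardR Hadj_irr k in auto)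
  have nN: "card {y\<in>W-S. Hadj None y} \<le> k - 1"
    using cardR card_mono[of "W - S" "{y\<in>W-S. Hadj None y}"] finW by auto
  have n01: "card {y\<in>W-S. Hadj (Some (0,1)) y} \<le> 1"
  proof -
    have "{y\<in>W-S. Hadj (Some (0,1)) y} \<subseteq> {Some (m-1, 1)}"
    proof
      fix y assume y: "y \<in> {y\<in>W-S. Hadj (Some (0,1)) y}"
      then obtain a b where p: "y = Some (a,b)" by (cases y) (auto simp: S_def S0_def)
      have yy: "a < m" "1 \<le> b" "b \<le> 2" using y p by (auto simp: W_def HW_def)
      have ns: "Some (a,b) \<notin> S" using y p by blast
      have h: "Hadj (Some (0,1)) (Some (a,b))" using y p by blast
      then have "(0 = a \<and> (1::nat) \<noteq> b \<and> 1 \<le> b + 2 \<and> b \<le> 1 + 2) \<or> (0 \<noteq> a \<and> (1::nat) = 1 \<and> b = 1)"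
        by (simp only: Hadj.simps)
      then have "a \<noteq> 0 \<and> b = 1" using ns yy by (auto simp: S_def S0_def)
      moreover have "\<not> (1 \<le> a \<and> a < m - 1)"
      proof
        assume "1 \<le> a \<and> a < m - 1"
        then have "Some (a,b) \<in> S1" using \<open>a \<noteq> 0 \<and> b = 1\<close> by (auto simp: S1_def)
        then show False using ns by (simp add: S_def)
      qed
      ultimately show "y \<in> {Some (m-1, 1)}" using p yy by auto
    qed
    then have "card {y\<in>W-S. Hadj (Some (0,1)) y} \<le> card {Some (m-1, 1::nat)}"
      by (rule card_mono[rotated]) simp
    then show ?thesis by simp
  qed
  have n02: "card {y\<in>W-S. Hadj (Some (0,2)) y} = 0"
  proof -
    have "{y\<in>W-S. Hadj (Some (0,2)) y} = {}"
    proof (rule ccontr)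
      assume "{y\<in>W-S. Hadj (Some (0,2)) y} \<noteq> {}"
      then obtain y where y: "y \<in> {y\<in>W-S. Hadj (Some (0,2)) y}" by blast
      then obtain a b where p: "y = Some (a,b)" by (cases y) (auto simp: S_def S0_def)
      have yy: "a < m" "1 \<le> b" "b \<le> 2" using y p by (auto simp: W_def HW_def)
      have ns: "Some (a,b) \<notin> S" using y p by blast
      have h: "Hadj (Some (0,2)) (Some (a,b))" using y p by blast
      then have "(0 = a \<and> (2::nat) \<noteq> b \<and> 2 \<le> b + 2 \<and> b \<le> 2 + 2) \<or> (0 \<noteq> a \<and> (2::nat) = 1 \<and> b = 1)"
        by (simp only: Hadj.simps)
      then show False using ns yy by (auto simp: S_def S0_def)
    qed
    then show ?thesis by (metis card.empty)
  qed
  have nj: "\<And>j. j \<in> {1..<m-1} \<Longrightarrow> card {y\<in>W-S. Hadj (Some (j,1)) y} \<le> 2"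
  proof -
    fix j :: nat assume j: "j \<in> {1..<m-1}"
    have "{y\<in>W-S. Hadj (Some (j,1)) y} \<subseteq> {Some (j,2), Some (m-1, 1)}"
    proof
      fix y assume y: "y \<in> {y\<in>W-S. Hadj (Some (j,1)) y}"
      then obtain a b where p: "y = Some (a,b)" by (cases y) (auto simp: S_def S0_def)
      have yy: "a < m" "1 \<le> b" "b \<le> 2" using y p by (auto simp: W_def HW_def)
      have ns: "Some (a,b) \<notin> S" using y p by blast
      have h: "Hadj (Some (j,1)) (Some (a,b))" using y p by blast
      then have hh: "(j = a \<and> (1::nat) \<noteq> b \<and> 1 \<le> b + 2 \<and> b \<le> 1 + 2) \<or> (j \<noteq> a \<and> (1::nat) = 1 \<and> b = 1)"
        by (simp only: Hadj.simps)
      show "y \<in> {Some (j,2), Some (m-1, 1)}"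
      proof (cases "j = a")
        case True
        then have "b = 2" using hh yy by auto
        then show ?thesis using p True by simp
      next
        case False
        then have b1: "b = 1" using hh by auto
        have "a \<noteq> 0" using ns b1 by (auto simp: S_def S0_def)
        moreover have "\<not> (1 \<le> a \<and> a < m - 1)"
        proof
          assume "1 \<le> a \<and> a < m - 1"
          then have "Some (a,b) \<in> S1" using b1 by (auto simp: S1_def)
          then show False using ns by (simp add: S_def)
        qed
        ultimately show ?thesis using p yy b1 by auto
      qed
    qed
    then have "card {y\<in>W-S. Hadj (Some (j,1)) y} \<le> card {Some (j,2), Some (m-1, 1::nat)}"
      by (rule card_mono[rotated]) simp
    also have "\<dots> \<le> 2" by (rule card2)
    finally show "card {y\<in>W-S. Hadj (Some (j,1)) y} \<le> 2" .
  qed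
  have cnt: "\<forall>v\<ge>1. card {x\<in>S. v \<le> card {y\<in>W-S. Hadj x y}} \<le> k - v"
  proof (intro allI impI)
    fix v :: nat assume v1: "1 \<le> v"
    have finS: "finite S" using SW finW finite_subset by blast
    consider "v = 1" | "v = 2" | "3 \<le> v" using v1 by linarith
    then show "card {x\<in>S. v \<le> card {y\<in>W-S. Hadj x y}} \<le> k - v"
    proof cases
      case 1
      have "{x\<in>S. v \<le> card {y\<in>W-S. Hadj x y}} \<subseteq> S - {Some (0,2)}" using n02 1 by auto
      then have "card {x\<in>S. v \<le> card {y\<in>W-S. Hadj x y}} \<le> card (S - {Some (0,2)})"
        by (rule card_mono[rotated]) (use finS in simp)
      also have "\<dots> = k - 1" using cardS finS by (simp add: S_def S0_def)
      finally show ?thesis using 1 by simp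
    next
      case 2
      have "{x\<in>S. v \<le> card {y\<in>W-S. Hadj x y}} \<subseteq> S - {Some (0,1), Some (0,2)}" using n02 n01 2 by auto
      then have "card {x\<in>S. v \<le> card {y\<in>W-S. Hadj x y}} \<le> card (S - {Some (0,1), Some (0,2)})"
        by (rule card_mono[rotated]) (use finS in simp)
      also have "\<dots> = k - 2" using cardS finS by (simp add: S_def S0_def card_Diff_subset)
      finally show ?thesis using 2 by simp
    next
      case 3
      have "{x\<in>S. v \<le> card {y\<in>W-S. Hadj x y}} \<subseteq> (if v \<le> k - 1 then {None} else {})"
      proof
        fix x assume x: "x \<in> {x\<in>S. v \<le> card {y\<in>W-S. Hadj x y}}"
        then have xS: "x \<in> S" and vx: "v \<le> card {y\<in>W-S. Hadj x y}" by auto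
        have "x = None"
        proof (rule ccontr)
          assume "x \<noteq> None"
          then have "x = Some (0,1) \<or> x = Some (0,2) \<or> (\<exists>j\<in>{1..<m-1}. x = Some (j,1))"
            using xS by (auto simp: S_def S0_def S1_def)
          then have "card {y\<in>W-S. Hadj x y} \<le> 2" using n01 n02 nj by auto
          then show False using vx 3 by linarith
        qed
        then show "x \<in> (if v \<le> k - 1 then {None} else {})" using vx nN by auto
      qed
      then have c: "card {x\<in>S. v \<le> card {y\<in>W-S. Hadj x y}} \<le> card (if v \<le> k - 1 then {None::(nat\<times>nat) option} else {})"
        by (rule card_mono[rotated]) simp
      show ?thesis
      proof (cases "v \<le> k - 1")
        case True
        then have c1: "card {x\<in>S. v \<le> card {y\<in>W-S. Hadj x y}} \<le> 1" using c by simp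
        have "1 \<le> k - v" using True 3 k by simp
        then show ?thesis using c1 by (rule order_trans[rotated])
      next
        case False
        then show ?thesis using c by simp
      qed
    qed
  qed
  show ?thesis unfolding W_def[symmetric]
    by (rule KK[OF finW Hadj_sym Hadj_irr SW cardS _ rest cnt]) (use k in simp)
qed




lemma cstep_a:
  assumes k: "m + 1 \<le> k" "3 \<le> k" and L2: "\<forall>i<m. L i \<le> 2"
  and big: "k < card (HW m L)" and small: "card (HW m L) \<le> 2*k - 2"
  shows "equitably_choosable (HW m L) Hadj k"
proof -
  define W where "W = HW m L"
  define A1 where "A1 = {i\<in>{..<m}. 1 \<le> L i}"
  define A2 where "A2 = {i\<in>{..<m}. L i = 2}"
  define F1 where "F1 = (\<lambda>i. Some (i, 1::nat)) ` A1"
  define F2 where "F2 = (\<lambda>i. Some (i, 2::nat)) ` A2"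
  have finW: "finite W" unfolding W_def by (rule HW_finite)
  have Weq: "W = insert None (F1 \<union> F2)"
  proof
    show "W \<subseteq> insert None (F1 \<union> F2)"
    proof
      fix y assume y: "y \<in> W"
      show "y \<in> insert None (F1 \<union> F2)"
      proof (cases y)
        case None then show ?thesis by simp
      next
        case (Some p)
        then obtain i a where p: "y = Some (i,a)" by (cases p) auto
        have "i < m" "1 \<le> a" "a \<le> L i" using y p by (auto simp: W_def HW_def)
        moreover have "L i \<le> 2" using L2 \<open>i < m\<close> by blast
        ultimately have "(a = 1 \<and> i \<in> A1) \<or> (a = 2 \<and> i \<in> A2)" by (auto simp: A1_def A2_def)
        then show ?thesis using p by (auto simp: F1_def F2_def)
      qed
    qed
    show "insert None (F1 \<union> F2) \<subseteq> W" by (auto simp: W_def HW_def F1_def F2_def A1_def A2_def)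
  qed
  have finA: "finite A1" "finite A2" by (auto simp: A1_def A2_def)
  have cF1: "card F1 = card A1" unfolding F1_def by (rule card_image) (simp add: inj_on_def)
  have cF2: "card F2 = card A2" unfolding F2_def by (rule card_image) (simp add: inj_on_def)
  have dis12: "F1 \<inter> F2 = {}" by (auto simp: F1_def F2_def)
  have finF: "finite F1" "finite F2" using finA by (auto simp: F1_def F2_def)
  have cardW: "card W = Suc (card A1 + card A2)"
  proof -
    have "card (F1 \<union> F2) = card A1 + card A2" using card_Un_disjoint[OF finF dis12] cF1 cF2 by simp
    moreover have "None \<notin> F1 \<union> F2" by (auto simp: F1_def F2_def)
    ultimately show ?thesis using Weq finF by simp
  qed
  have A1m: "card A1 \<le> m"
  proof -
    have "card A1 \<le> card {..<m}" by (rule card_mono) (auto simp: A1_def)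
    then show ?thesis by simp
  qed
  have "k - 1 - card A1 \<le> card A2" using big cardW W_def by simp
  then obtain Q where Q: "Q \<subseteq> A2" "card Q = k - 1 - card A1" "finite Q"
    by (rule obtain_subset_with_card_n)
  define FQ where "FQ = (\<lambda>i. Some (i, 2::nat)) ` Q"
  define S where "S = insert None (F1 \<union> FQ)"
  have cFQ: "card FQ = card Q" unfolding FQ_def by (rule card_image) (simp add: inj_on_def)
  have SW: "S \<subseteq> W" using Q(1) by (auto simp: S_def Weq F2_def FQ_def)
  have cardS: "card S = k"
  proof -
    have d: "F1 \<inter> FQ = {}" by (auto simp: F1_def FQ_def)
    have fQ: "finite FQ" using Q(3) by (simp add: FQ_def)
    have "card (F1 \<union> FQ) = card A1 + card Q" using card_Un_disjoint[OF finF(1) fQ d] cF1 cFQ by simp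
    moreover have "None \<notin> F1 \<union> FQ" by (auto simp: F1_def FQ_def)
    ultimately have "card S = Suc (card A1 + card Q)" using finF fQ by (simp add: S_def)
    then show ?thesis using Q(2) A1m k by simp
  qed
  have WS: "W - S = (\<lambda>i. Some (i, 2::nat)) ` (A2 - Q)"
    using Q(1) by (auto simp: Weq S_def F1_def F2_def FQ_def)
  define w where "w = card (W - S)"
  have w_eq: "w = card (A2 - Q)" unfolding w_def WS by (rule card_image) (simp add: inj_on_def)
  have finS: "finite S" using SW finW finite_subset by blast
  have "card (W - S) = card W - card S" by (rule card_Diff_subset[OF finS SW])
  then have wk: "w \<le> k - 2" using small cardS W_def w_def by simp
  have rest: "equitably_choosable (W - S) Hadj k"
    by (rule base) (use finW wk w_def Hadj_irr k in auto)
  have nN: "card {y\<in>W-S. Hadj None y} \<le> w"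
    unfolding w_def by (rule card_mono) (use finW in auto)
  have n1: "\<And>i. i \<in> A1 \<Longrightarrow> {y\<in>W-S. Hadj (Some (i,1)) y} \<subseteq> (if i \<in> A2 - Q then {Some (i,2)} else {})"
  proof
    fix i y assume i: "i \<in> A1" and y: "y \<in> {y\<in>W-S. Hadj (Some (i,1)) y}"
    then obtain j where j: "y = Some (j,2)" "j \<in> A2 - Q" unfolding WS by auto
    have "Hadj (Some (i,1)) (Some (j,2))" using y j by blast
    then have "i = j" by (simp only: Hadj.simps) simp
    then show "y \<in> (if i \<in> A2 - Q then {Some (i,2)} else {})" using j by simp
  qed
  have n2: "\<And>i. {y\<in>W-S. Hadj (Some (i,2)) y} = {}"
  proof (rule ccontr)
    fix i assume "{y\<in>W-S. Hadj (Some (i,2)) y} \<noteq> {}"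
    then obtain y where y: "y \<in> {y\<in>W-S. Hadj (Some (i,2)) y}" by blast
    then obtain j where j: "y = Some (j,2)" unfolding WS by auto
    have "Hadj (Some (i,2)) (Some (j,2))" using y j by blast
    then show False by (simp only: Hadj.simps) simp
  qed
  have cnt: "\<forall>v\<ge>1. card {x\<in>S. v \<le> card {y\<in>W-S. Hadj x y}} \<le> k - v"
  proof (intro allI impI)
    fix v :: nat assume v1: "1 \<le> v"
    define T1 where "T1 = (if v \<le> w then {None::(nat\<times>nat) option} else {})"
    define T2 where "T2 = (if v \<le> 1 then (\<lambda>i. Some (i, 1::nat)) ` (A2 - Q) else {})"
    have sub: "{x\<in>S. v \<le> card {y\<in>W-S. Hadj x y}} \<subseteq> T1 \<union> T2"
    proof
      fix x assume x: "x \<in> {x\<in>S. v \<le> card {y\<in>W-S. Hadj x y}}"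
      then have xS: "x \<in> S" and vx: "v \<le> card {y\<in>W-S. Hadj x y}" by auto
      consider "x = None" | i where "i \<in> A1" "x = Some (i,1)" | i where "i \<in> Q" "x = Some (i,2)"
        using xS by (auto simp: S_def F1_def FQ_def)
      then show "x \<in> T1 \<union> T2"
      proof cases
        case 1 then show ?thesis using vx nN by (simp add: T1_def)
      next
        case (2 i)
        have c: "card {y\<in>W-S. Hadj (Some (i,1)) y} \<le> card (if i \<in> A2 - Q then {Some (i,2::nat)} else {})"
          by (rule card_mono[OF _ n1[OF 2(1)]]) simp
        show ?thesis
        proof (cases "i \<in> A2 - Q")
          case True
          then have "v \<le> 1" using c vx 2 by simp
          then show ?thesis using True 2 by (simp add: T2_def)
        next
          case False
          have e: "(if i \<in> A2 - Q then {Some (i,2::nat)} else {}) = {}" using False by (rule if_not_P)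
          have "card {y\<in>W-S. Hadj (Some (i,1)) y} = 0" using c unfolding e by simp
          then show ?thesis using vx 2 v1 by simp
        qed
      next
        case (3 i)
        have "card {y\<in>W-S. Hadj (Some (i,2)) y} = 0" unfolding n2[of i] by simp
        then show ?thesis using vx 3 v1 by simp
      qed
    qed
    have "card {x\<in>S. v \<le> card {y\<in>W-S. Hadj x y}} \<le> card (T1 \<union> T2)"
      by (rule card_mono[OF _ sub]) (simp add: T1_def T2_def finA)
    also have "\<dots> \<le> card T1 + card T2" by (rule card_Un_le)
    also have "card T2 \<le> (if v \<le> 1 then w else 0)"
      unfolding T2_def w_eq by (auto intro: card_image_le simp: finA)
    finally have c: "card {x\<in>S. v \<le> card {y\<in>W-S. Hadj x y}} \<le> card T1 + (if v \<le> 1 then w else 0)" by simp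
    show "card {x\<in>S. v \<le> card {y\<in>W-S. Hadj x y}} \<le> k - v"
    proof (cases "v = 1")
      case True
      then have "card T1 \<le> 1" by (simp add: T1_def)
      then show ?thesis using c True wk k by simp
    next
      case False
      then have "card {x\<in>S. v \<le> card {y\<in>W-S. Hadj x y}} \<le> card T1" using c v1 by simp
      moreover have "card T1 \<le> k - v" using wk v1 by (simp add: T1_def; linarith)
      ultimately show ?thesis by linarith
    qed
  qed
  show ?thesis unfolding W_def[symmetric]
    by (rule KK[OF finW Hadj_sym Hadj_irr SW cardS _ rest cnt]) (use k in simp)
qed




lemma sum_split_exists:
  fixes L :: "nat \<Rightarrow> nat" and n :: nat
  shows "s \<le> (\<Sum>i<n. L i) \<Longrightarrow> \<exists>t. (\<forall>i. t i \<le> L i) \<and> (\<Sum>i<n. t i) = s"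
proof (induction n arbitrary: s)
  case 0
  then show ?case by (intro exI[of _ "\<lambda>_. 0"]) simp
next
  case (Suc n)
  show ?case
  proof (cases "s \<le> (\<Sum>i<n. L i)")
    case True
    then obtain t where t: "\<forall>i. t i \<le> L i" "(\<Sum>i<n. t i) = s" using Suc.IH by blast
    define t' where "t' = t(n := 0)"
    have "(\<Sum>i<n. t' i) = (\<Sum>i<n. t i)" by (rule sum.cong) (auto simp: t'_def)
    then have "(\<Sum>i<Suc n. t' i) = s" using t by (simp add: t'_def)
    moreover have "\<forall>i. t' i \<le> L i" using t by (simp add: t'_def)
    ultimately show ?thesis by blast
  next
    case False
    define t where "t = (\<lambda>i. if i < n then L i else if i = n then s - (\<Sum>i<n. L i) else 0)"
    have "(\<Sum>i<n. t i) = (\<Sum>i<n. L i)" by (rule sum.cong) (auto simp: t_def)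
    then have "(\<Sum>i<Suc n. t i) = s" using False by (simp add: t_def)
    moreover have "\<forall>i. t i \<le> L i" using Suc.prems by (auto simp: t_def)
    ultimately show ?thesis by blast
  qed
qed

lemma H_main:
  assumes k3: "3 \<le> k" and km: "m + 1 \<le> k"
  shows "equitably_choosable (HW m L) Hadj k"
proof (induction "\<Sum>i<m. L i" arbitrary: L rule: less_induct)
  case less
  show ?case
  proof (cases "card (HW m L) \<le> k")
    case True
    then show ?thesis by (rule base[where adj=Hadj, OF HW_finite[of m L] Hadj_irr]) (use k3 in simp)
  next
    case False
    then have big: "k < card (HW m L)" by simp
    then have kS: "k \<le> (\<Sum>i<m. L i)" using HW_card[of m L] by simp
    show ?thesis
    proof (cases "\<exists>g<m. 3 \<le> L g")
      case True
      then obtain g where g: "g < m" "3 \<le> L g" by blast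
      define tg where "tg = min (L g) k"
      define L0 where "L0 = L(g := 0)"
      have s1: "(\<Sum>i<m. L i) = L g + (\<Sum>i\<in>{..<m} - {g}. L i)"
        using g by (simp add: sum.remove)
      have s2: "(\<Sum>i<m. L0 i) = (\<Sum>i\<in>{..<m} - {g}. L i)"
        using g by (simp add: sum.remove L0_def)
      have "k - tg \<le> (\<Sum>i<m. L0 i)" using s1 s2 kS by (simp add: tg_def min_def; linarith)
      then obtain t0 where t0: "\<forall>i. t0 i \<le> L0 i" "(\<Sum>i<m. t0 i) = k - tg"
        using sum_split_exists by blast
      have t0g: "t0 g = 0" using t0(1) by (metis L0_def fun_upd_same le_zero_eq)
      define t where "t = t0(g := tg)"
      have tL: "\<forall>i. t i \<le> L i"
      proof
        fix i show "t i \<le> L i"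
          using t0(1) by (cases "i = g") (auto simp: t_def tg_def L0_def split: if_splits)
      qed
      have tsum: "(\<Sum>i<m. t i) = k"
      proof -
        have "(\<Sum>i<m. t i) = t g + (\<Sum>i\<in>{..<m} - {g}. t i)" using g by (simp add: sum.remove)
        also have "(\<Sum>i\<in>{..<m} - {g}. t i) = (\<Sum>i\<in>{..<m} - {g}. t0 i)"
          by (rule sum.cong) (auto simp: t_def)
        also have "\<dots> = (\<Sum>i<m. t0 i)" using g t0g by (simp add: sum.remove)
        finally show ?thesis using t0(2) by (simp add: t_def tg_def min_def)
      qed
      have tg3: "3 \<le> t g" using g k3 by (simp add: t_def tg_def)
      define S where "S = Some ` TS m L t"
      have SW: "S \<subseteq> HW m L" unfolding S_def by (rule TS_in)
      have cardS: "card S = k" unfolding S_def using TS_card[OF tL] tsum by simp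
      have restEq: "HW m L - S = HW m (\<lambda>i. L i - t i)" unfolding S_def by (rule TS_sub[OF tL])
      have "(\<Sum>i<m. L i - t i) = (\<Sum>i<m. L i) - (\<Sum>i<m. t i)"
        by (rule sum_subtractf_nat) (use tL in auto)
      then have lt: "(\<Sum>i<m. L i - t i) < (\<Sum>i<m. L i)" using tsum kS k3 by simp
      have rest: "equitably_choosable (HW m L - S) Hadj k"
        unfolding restEq by (rule less.hyps[OF lt])
      have cnt: "\<forall>v\<ge>1. card {x\<in>S. v \<le> card {y\<in>HW m L - S. Hadj x y}} \<le> k - v"
        unfolding S_def by (rule tail_cnt[OF km tL tsum g(1) tg3])
      show ?thesis
        by (rule KK[OF HW_finite Hadj_sym Hadj_irr SW cardS _ rest cnt]) (use k3 in simp)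
    next
      case False
      then have L2: "\<forall>i<m. L i \<le> 2" by auto
      show ?thesis
      proof (cases "card (HW m L) \<le> 2*k - 2")
        case True
        then show ?thesis by (rule cstep_a[OF km k3 L2 big])
      next
        case False
        have "(\<Sum>i<m. L i) \<le> (\<Sum>i<m. (2::nat))" by (rule sum_mono) (use L2 in auto)
        then have s2m: "(\<Sum>i<m. L i) \<le> 2*m" by simp
        then have mk: "m + 1 = k" using False HW_card[of m L] km by simp
        have all2: "\<forall>i<m. L i = 2"
        proof (rule ccontr)
          assume "\<not> (\<forall>i<m. L i = 2)"
          then obtain j where j: "j < m" "L j \<noteq> 2" by blast
          have "(\<Sum>i<m. L i) < (\<Sum>i<m. (2::nat))"
          proof (rule sum_strict_mono_ex1)
            show "\<forall>x\<in>{..<m}. L x \<le> 2" using L2 by auto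
            show "\<exists>a\<in>{..<m}. L a < 2" using j L2 by (intro bexI[of _ j]) auto
          qed simp
          then show False using False HW_card[of m L] mk by simp
        qed
        have "HW m L = HW m (\<lambda>_. 2)" using all2 by (auto simp: HW_def)
        then show ?thesis using cstep_b[OF mk k3] by simp
      qed
    qed
  qed
qed




locale spider =
  fixes m :: nat and c :: 'a and P :: "nat \<Rightarrow> 'a list"
  assumes dist: "\<forall>i<m. distinct (P i) \<and> length (P i) \<ge> 2 \<and> hd (P i) = c"
  and disj: "\<forall>i<m. \<forall>j<m. i \<noteq> j \<longrightarrow> set (P i) \<inter> set (P j) = {c}"
begin

definition Lf :: "nat \<Rightarrow> nat" where "Lf i = 2 * (length (P i) - 1)"

fun hh :: "(nat \<times> nat) option \<Rightarrow> 'a + 'a set" where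
  "hh None = Inl c"
| "hh (Some (i,a)) = (if even a then Inl (P i ! (a div 2)) else Inr {P i ! (a div 2), P i ! Suc (a div 2)})"

definition EE where "EE = (\<Union>i<m. path_edges (P i))"
definition VV where "VV = insert c (\<Union>i<m. set (P i))"

lemma P0: "i < m \<Longrightarrow> P i ! 0 = c"
  using dist by (metis hd_conv_nth le_zero_eq list.size(3) numeral_le_iff semiring_norm(69) zero_neq_numeral)

lemma pos:
  assumes "i < m" "j < m" "\<alpha> < length (P i)" "\<beta> < length (P j)" "P i ! \<alpha> = P j ! \<beta>"
  shows "(\<alpha> = 0 \<and> \<beta> = 0) \<or> (i = j \<and> \<alpha> = \<beta>)"
proof (cases "i = j")
  case True
  then show ?thesis using assms dist nth_eq_iff_index_eq by metis
next
  case False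
  have "P i ! \<alpha> \<in> set (P i) \<inter> set (P j)" using assms by (metis IntI nth_mem)
  then have "P i ! \<alpha> = c" using disj False assms(1,2) by blast
  then have "P i ! \<alpha> = P i ! 0" "P j ! \<beta> = P j ! 0" using P0 assms by auto
  then have "\<alpha> = 0" "\<beta> = 0" using assms dist nth_eq_iff_index_eq
    by (metis gr_zeroI length_greater_0_conv list.size(3) not_less0)+
  then show ?thesis by simp
qed

lemma pos1:
  assumes "i < m" "j < m" "\<alpha> < length (P i)" "\<beta> < length (P j)" "P i ! \<alpha> = P j ! \<beta>" "1 \<le> \<alpha> \<or> 1 \<le> \<beta>"
  shows "i = j \<and> \<alpha> = \<beta>"
  using pos[OF assms(1-5)] assms(6) by auto

lemma same_arm:
  assumes "i < m" "\<alpha> < length (P i)" "\<beta> < length (P i)" "P i ! \<alpha> = P i ! \<beta>"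
  shows "\<alpha> = \<beta>"
  using assms dist nth_eq_iff_index_eq by metis

lemma EE_mem: "e \<in> EE \<longleftrightarrow> (\<exists>j<m. \<exists>r. Suc r < length (P j) \<and> e = {P j ! r, P j ! Suc r})"
  by (auto simp: EE_def path_edges_def)

lemma nlen: "i < m \<Longrightarrow> 2 \<le> length (P i)" using dist by blast

lemma len0: "i < m \<Longrightarrow> 0 < length (P i)" using nlen[of i] by linarith

lemma hh_even: "hh (Some (i, 2*q)) = Inl (P i ! q)" by simp
lemma hh_odd: "hh (Some (i, 2*q+1)) = Inr {P i ! q, P i ! Suc q}" by simp

lemma HW_cases:
  assumes "x \<in> HW m Lf"
  shows "x = None \<or> (\<exists>i q. i < m \<and> 1 \<le> q \<and> q < length (P i) \<and> x = Some (i, 2*q))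
         \<or> (\<exists>i q. i < m \<and> Suc q < length (P i) \<and> x = Some (i, 2*q+1))"
proof (cases x)
  case None then show ?thesis by simp
next
  case (Some p)
  then obtain i a where p: "x = Some (i,a)" by (cases p) auto
  have ia: "i < m" "1 \<le> a" "a \<le> 2 * (length (P i) - 1)" using assms p by (auto simp: HW_def Lf_def)
  have n2: "2 \<le> length (P i)" using nlen ia(1) .
  show ?thesis
  proof (cases "even a")
    case True
    then obtain q where q: "a = 2*q" by blast
    then have "1 \<le> q" "q < length (P i)" using ia n2 by auto
    then show ?thesis using p q ia by blast
  next
    case False
    then obtain q where q: "a = 2*q+1" using oddE by blast
    then have "Suc q < length (P i)" using ia n2 by auto
    then show ?thesis using p q ia by blast
  qed
qed

lemma edge_neq: "j < m \<Longrightarrow> Suc r < length (P j) \<Longrightarrow> P j ! r \<noteq> P j ! Suc r"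
  using same_arm[of j r "Suc r"] by auto

lemma L1: "\<not> total_adj EE (Inl c) (Inl c)"
proof
  assume "total_adj EE (Inl c) (Inl c)"
  then have "{c, c} \<in> EE" by simp
  then obtain j r where jr: "j < m" "Suc r < length (P j)" "{c,c} = {P j ! r, P j ! Suc r}"
    unfolding EE_mem by blast
  then have "P j ! r = P j ! Suc r" by (metis doubleton_eq_iff)
  then show False using edge_neq jr by blast
qed

lemma L2:
  assumes "i < m" "1 \<le> q" "q < length (P i)" "total_adj EE (Inl c) (Inl (P i ! q))"
  shows "q = 1"
proof -
  have "{c, P i ! q} \<in> EE" using assms(4) by simp
  then obtain j r where jr: "j < m" "Suc r < length (P j)" "{c, P i ! q} = {P j ! r, P j ! Suc r}"
    unfolding EE_mem by blast
  then have "(c = P j ! r \<and> P i ! q = P j ! Suc r) \<or> (c = P j ! Suc r \<and> P i ! q = P j ! r)"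
    by (simp add: doubleton_eq_iff)
  then show ?thesis
  proof
    assume a: "c = P j ! r \<and> P i ! q = P j ! Suc r"
    then have "i = j \<and> q = Suc r" using pos1[of i j q "Suc r"] assms jr by auto
    moreover have "r = 0"
    proof -
      have "P j ! 0 = P j ! r" using a P0[OF jr(1)] by simp
      then show ?thesis using same_arm[OF jr(1) len0[OF jr(1)]] jr(2) by simp
    qed
    ultimately show ?thesis by simp
  next
    assume a: "c = P j ! Suc r \<and> P i ! q = P j ! r"
    have "P j ! 0 = P j ! Suc r" using a P0[OF jr(1)] by simp
    then have "0 = Suc r" using same_arm[OF jr(1) len0[OF jr(1)]] jr(2) by blast
    then show ?thesis by simp
  qed
qed

lemma L3:
  assumes "i < m" "Suc q < length (P i)" "total_adj EE (Inl c) (Inr {P i ! q, P i ! Suc q})"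
  shows "q = 0"
proof -
  have "c = P i ! q \<or> c = P i ! Suc q" using assms(3) by simp
  then show ?thesis
  proof
    assume "c = P i ! q"
    then have "P i ! 0 = P i ! q" using P0[OF assms(1)] by simp
    then have "0 = q" using same_arm[OF assms(1) len0[OF assms(1)]] assms(2) by simp
    then show ?thesis by simp
  next
    assume "c = P i ! Suc q"
    then have "P i ! 0 = P i ! Suc q" using P0[OF assms(1)] by simp
    then have "0 = Suc q" using same_arm[OF assms(1) len0[OF assms(1)]] assms(2) by blast
    then show ?thesis by simp
  qed
qed

lemma L4:
  assumes "i < m" "1 \<le> q" "q < length (P i)" "j < m" "1 \<le> r" "r < length (P j)"
    "total_adj EE (Inl (P i ! q)) (Inl (P j ! r))"
  shows "i = j \<and> (r = Suc q \<or> q = Suc r)"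
proof -
  have "{P i ! q, P j ! r} \<in> EE" using assms(7) by simp
  then obtain l s where ls: "l < m" "Suc s < length (P l)" "{P i ! q, P j ! r} = {P l ! s, P l ! Suc s}"
    unfolding EE_mem by blast
  then have "(P i ! q = P l ! s \<and> P j ! r = P l ! Suc s) \<or> (P i ! q = P l ! Suc s \<and> P j ! r = P l ! s)"
    by (simp add: doubleton_eq_iff)
  then show ?thesis
  proof
    assume a: "P i ! q = P l ! s \<and> P j ! r = P l ! Suc s"
    have "i = l \<and> q = s" using pos1[of i l q s] a assms ls by auto
    moreover have "j = l \<and> r = Suc s" using pos1[of j l r "Suc s"] a assms ls by auto
    ultimately show ?thesis by simp
  next
    assume a: "P i ! q = P l ! Suc s \<and> P j ! r = P l ! s"
    have "i = l \<and> q = Suc s" using pos1[of i l q "Suc s"] a assms ls by auto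
    moreover have "j = l \<and> r = s" using pos1[of j l r s] a assms ls by auto
    ultimately show ?thesis by simp
  qed
qed

lemma L5:
  assumes "i < m" "1 \<le> q" "q < length (P i)" "j < m" "Suc r < length (P j)"
    "total_adj EE (Inl (P i ! q)) (Inr {P j ! r, P j ! Suc r})"
  shows "i = j \<and> (q = r \<or> q = Suc r)"
proof -
  have "P i ! q = P j ! r \<or> P i ! q = P j ! Suc r" using assms(6) by simp
  then show ?thesis
  proof
    assume a: "P i ! q = P j ! r"
    then show ?thesis using pos1[of i j q r] assms by auto
  next
    assume a: "P i ! q = P j ! Suc r"
    then show ?thesis using pos1[of i j q "Suc r"] assms by auto
  qed
qed

lemma L6:
  assumes "i < m" "Suc q < length (P i)" "j < m" "Suc r < length (P j)"
    "total_adj EE (Inr {P i ! q, P i ! Suc q}) (Inr {P j ! r, P j ! Suc r})"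
  shows "(i = j \<and> q \<noteq> r \<and> q \<le> Suc r \<and> r \<le> Suc q) \<or> (i \<noteq> j \<and> q = 0 \<and> r = 0)"
proof -
  have ne: "{P i ! q, P i ! Suc q} \<noteq> {P j ! r, P j ! Suc r}"
   and int: "{P i ! q, P i ! Suc q} \<inter> {P j ! r, P j ! Suc r} \<noteq> {}" using assms(5) by auto
  obtain \<alpha> \<beta> where ab: "\<alpha> = q \<or> \<alpha> = Suc q" "\<beta> = r \<or> \<beta> = Suc r" "P i ! \<alpha> = P j ! \<beta>"
    using int by blast
  have ab2: "\<alpha> < length (P i)" "\<beta> < length (P j)" using ab assms by auto
  have "(\<alpha> = 0 \<and> \<beta> = 0) \<or> (i = j \<and> \<alpha> = \<beta>)" by (rule pos[OF assms(1) assms(3) ab2 ab(3)])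
  then show ?thesis
  proof
    assume "\<alpha> = 0 \<and> \<beta> = 0"
    then have qr: "q = 0" "r = 0" using ab by auto
    have "i \<noteq> j" using ne qr by auto
    then show ?thesis using qr by simp
  next
    assume a: "i = j \<and> \<alpha> = \<beta>"
    then have "q \<le> Suc r \<and> r \<le> Suc q" using ab by auto
    moreover have "q \<noteq> r" using ne a by auto
    ultimately show ?thesis using a by simp
  qed
qed

lemma HW_V: "i < m \<Longrightarrow> 1 \<le> q \<Longrightarrow> q < length (P i) \<Longrightarrow> Some (i, 2*q) \<in> HW m Lf"
  by (auto simp: HW_def Lf_def)

lemma HW_E: "i < m \<Longrightarrow> Suc q < length (P i) \<Longrightarrow> Some (i, 2*q+1) \<in> HW m Lf"
  by (auto simp: HW_def Lf_def)

lemma c_not_inner: "i < m \<Longrightarrow> q < length (P i) \<Longrightarrow> c = P i ! q \<Longrightarrow> q = 0"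
proof -
  assume a: "i < m" "q < length (P i)" "c = P i ! q"
  then have "P i ! 0 = P i ! q" using P0 by simp
  then have "0 = q" using same_arm[OF a(1) len0[OF a(1)] a(2)] by simp
  then show ?thesis by simp
qed

lemma hh_inj: "inj_on hh (HW m Lf)"
proof (rule inj_onI)
  fix x y assume xH: "x \<in> HW m Lf" and yH: "y \<in> HW m Lf" and eq: "hh x = hh y"
  from HW_cases[OF xH] consider (N1) "x = None"
    | (V1) i q where "i<m" "1 \<le> q" "q < length (P i)" "x = Some (i,2*q)"
    | (E1) i q where "i<m" "Suc q < length (P i)" "x = Some (i,2*q+1)" by blast
  note cx = this
  from HW_cases[OF yH] consider (N2) "y = None"
    | (V2) j r where "j<m" "1 \<le> r" "r < length (P j)" "y = Some (j,2*r)"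
    | (E2) j r where "j<m" "Suc r < length (P j)" "y = Some (j,2*r+1)" by blast
  note cy = this
  show "x = y"
  proof (cases rule: cx)
    case N1
    show ?thesis
    proof (cases rule: cy)
      case N2 then show ?thesis using N1 by simp
    next
      case (V2 j r)
      then have "c = P j ! r" using eq N1 by (simp only: hh.simps(1) hh_even) simp
      then show ?thesis using c_not_inner V2 by auto
    next
      case (E2 j r)
      then show ?thesis using eq N1 by (simp only: hh.simps(1) hh_odd) simp
    qed
  next
    case (V1 i q)
    show ?thesis
    proof (cases rule: cy)
      case N2
      then have "c = P i ! q" using eq V1 by (simp only: hh.simps(1) hh_even) simp
      then show ?thesis using c_not_inner V1 by auto
    next
      case (V2 j r)
      then have "P i ! q = P j ! r" using eq V1 by (simp only: hh_even) simp
      then have "i = j \<and> q = r" using pos1[of i j q r] V1 V2 by auto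
      then show ?thesis using V1 V2 by simp
    next
      case (E2 j r)
      then show ?thesis using eq V1 by (simp only: hh_odd hh_even) simp
    qed
  next
    case (E1 i q)
    show ?thesis
    proof (cases rule: cy)
      case N2
      then show ?thesis using eq E1 by (simp only: hh.simps(1) hh_odd) simp
    next
      case (V2 j r)
      then show ?thesis using eq E1 by (simp only: hh_odd hh_even) simp
    next
      case (E2 j r)
      then have "{P i ! q, P i ! Suc q} = {P j ! r, P j ! Suc r}" using eq E1 by (simp only: hh_odd) simp
      then have "(P i ! q = P j ! r \<and> P i ! Suc q = P j ! Suc r) \<or> (P i ! q = P j ! Suc r \<and> P i ! Suc q = P j ! r)"
        by (simp add: doubleton_eq_iff)
      then show ?thesis
      proof
        assume a: "P i ! q = P j ! r \<and> P i ! Suc q = P j ! Suc r"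
        then have "i = j \<and> Suc q = Suc r" using pos1[of i j "Suc q" "Suc r"] E1 E2 by auto
        then show ?thesis using E1 E2 by simp
      next
        assume a: "P i ! q = P j ! Suc r \<and> P i ! Suc q = P j ! r"
        then have "i = j \<and> q = Suc r" using pos1[of i j q "Suc r"] E1 E2 by auto
        moreover have "i = j \<and> Suc q = r" using a pos1[of i j "Suc q" r] E1 E2 by auto
        ultimately show ?thesis by simp
      qed
    qed
  qed
qed

lemma hh_img: "hh ` HW m Lf = total_vertices VV EE"
proof
  show "hh ` HW m Lf \<subseteq> total_vertices VV EE"
  proof
    fix z assume "z \<in> hh ` HW m Lf"
    then obtain x where xH: "x \<in> HW m Lf" and z: "z = hh x" by blast
    from HW_cases[OF xH] show "z \<in> total_vertices VV EE"
    proof (elim disjE exE conjE)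
      assume "x = None" then show ?thesis using z by (simp add: total_vertices_def VV_def)
    next
      fix i q assume a: "i < m" "1 \<le> q" "q < length (P i)" "x = Some (i, 2*q)"
      then have "P i ! q \<in> VV" unfolding VV_def using nth_mem by blast
      then show ?thesis using z a by (simp add: total_vertices_def)
    next
      fix i q assume a: "i < m" "Suc q < length (P i)" "x = Some (i, 2*q+1)"
      then have "{P i ! q, P i ! Suc q} \<in> EE" unfolding EE_mem by blast
      then show ?thesis using z a by (simp only: hh_odd total_vertices_def) blast
    qed
  qed
  show "total_vertices VV EE \<subseteq> hh ` HW m Lf"
  proof
    fix z assume z: "z \<in> total_vertices VV EE"
    then consider (A) v where "z = Inl v" "v \<in> VV" | (B) e where "z = Inr e" "e \<in> EE"
      unfolding total_vertices_def by blast
    then show "z \<in> hh ` HW m Lf"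
    proof cases
      case (A v)
      show ?thesis
      proof (cases "v = c")
        case True
        then have "z = hh None" using A by simp
        moreover have "None \<in> HW m Lf" by (simp add: HW_def)
        ultimately show ?thesis by blast
      next
        case False
        then obtain i where i: "i < m" "v \<in> set (P i)" using A by (auto simp: VV_def)
        then obtain q where q: "q < length (P i)" "v = P i ! q" by (metis in_set_conv_nth)
        have "q \<noteq> 0"
        proof
          assume "q = 0"
          then show False using q False P0[OF i(1)] by simp
        qed
        then have "Some (i, 2*q) \<in> HW m Lf" using HW_V i q by simp
        moreover have "z = hh (Some (i, 2*q))" using A q by (simp only: hh_even)
        ultimately show ?thesis by blast
      qed
    next
      case (B e)
      then obtain j r where jr: "j < m" "Suc r < length (P j)" "e = {P j ! r, P j ! Suc r}"
        unfolding EE_mem by blast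
      have "Some (j, 2*r+1) \<in> HW m Lf" using HW_E jr by simp
      moreover have "z = hh (Some (j, 2*r+1))" using B jr by (simp only: hh_odd)
      ultimately show ?thesis by blast
    qed
  qed
qed

lemma tadj_sym: "total_adj E u v \<Longrightarrow> total_adj E v u"
  by (cases u; cases v) (auto simp: insert_commute)

lemma adj_ord:
  assumes xH: "x \<in> HW m Lf" and yH: "y \<in> HW m Lf" and ad: "total_adj EE (hh x) (hh y)"
  shows "Hadj x y"
proof -
  from HW_cases[OF xH] consider (N1) "x = None"
    | (V1) i q where "i<m" "1 \<le> q" "q < length (P i)" "x = Some (i,2*q)"
    | (E1) i q where "i<m" "Suc q < length (P i)" "x = Some (i,2*q+1)" by blast
  note cx = this
  from HW_cases[OF yH] consider (N2) "y = None"
    | (V2) j r where "j<m" "1 \<le> r" "r < length (P j)" "y = Some (j,2*r)"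
    | (E2) j r where "j<m" "Suc r < length (P j)" "y = Some (j,2*r+1)" by blast
  note cy = this
  have NV: "\<And>j r. j<m \<Longrightarrow> 1 \<le> r \<Longrightarrow> r < length (P j) \<Longrightarrow> total_adj EE (Inl c) (Inl (P j ! r)) \<Longrightarrow> Hadj None (Some (j, 2*r))"
    using L2 by fastforce
  have NE: "\<And>j r. j<m \<Longrightarrow> Suc r < length (P j) \<Longrightarrow> total_adj EE (Inl c) (Inr {P j ! r, P j ! Suc r}) \<Longrightarrow> Hadj None (Some (j, 2*r+1))"
    using L3 by fastforce
  have VV': "\<And>i q j r. i<m \<Longrightarrow> 1 \<le> q \<Longrightarrow> q < length (P i) \<Longrightarrow> j<m \<Longrightarrow> 1 \<le> r \<Longrightarrow> r < length (P j) \<Longrightarrow>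
      total_adj EE (Inl (P i ! q)) (Inl (P j ! r)) \<Longrightarrow> Hadj (Some (i, 2*q)) (Some (j, 2*r))"
  proof -
    fix i q j r assume a: "i<m" "1 \<le> q" "q < length (P i)" "j<m" "1 \<le> r" "r < length (P j)"
      "total_adj EE (Inl (P i ! q)) (Inl (P j ! r))"
    have "i = j \<and> (r = Suc q \<or> q = Suc r)" by (rule L4[OF a])
    then show "Hadj (Some (i, 2*q)) (Some (j, 2*r))" by auto
  qed
  have VE: "\<And>i q j r. i<m \<Longrightarrow> 1 \<le> q \<Longrightarrow> q < length (P i) \<Longrightarrow> j<m \<Longrightarrow> Suc r < length (P j) \<Longrightarrow>
      total_adj EE (Inl (P i ! q)) (Inr {P j ! r, P j ! Suc r}) \<Longrightarrow> Hadj (Some (i, 2*q)) (Some (j, 2*r+1))"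
  proof -
    fix i q j r assume a: "i<m" "1 \<le> q" "q < length (P i)" "j<m" "Suc r < length (P j)"
      "total_adj EE (Inl (P i ! q)) (Inr {P j ! r, P j ! Suc r})"
    have "i = j \<and> (q = r \<or> q = Suc r)" by (rule L5[OF a])
    then show "Hadj (Some (i, 2*q)) (Some (j, 2*r+1))" by auto
  qed
  have EE': "\<And>i q j r. i<m \<Longrightarrow> Suc q < length (P i) \<Longrightarrow> j<m \<Longrightarrow> Suc r < length (P j) \<Longrightarrow>
      total_adj EE (Inr {P i ! q, P i ! Suc q}) (Inr {P j ! r, P j ! Suc r}) \<Longrightarrow> Hadj (Some (i, 2*q+1)) (Some (j, 2*r+1))"
  proof -
    fix i q j r assume a: "i<m" "Suc q < length (P i)" "j<m" "Suc r < length (P j)"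
      "total_adj EE (Inr {P i ! q, P i ! Suc q}) (Inr {P j ! r, P j ! Suc r})"
    have "(i = j \<and> q \<noteq> r \<and> q \<le> Suc r \<and> r \<le> Suc q) \<or> (i \<noteq> j \<and> q = 0 \<and> r = 0)" by (rule L6[OF a])
    then show "Hadj (Some (i, 2*q+1)) (Some (j, 2*r+1))" by auto
  qed
  show ?thesis
  proof (cases rule: cx)
    case N1
    show ?thesis
    proof (cases rule: cy)
      case N2 then show ?thesis using ad N1 L1 by simp
    next
      case (V2 j r) then show ?thesis using ad N1 NV by (simp only: hh.simps(1) hh_even)
    next
      case (E2 j r) then show ?thesis using ad N1 NE by (simp only: hh.simps(1) hh_odd)
    qed
  next
    case (V1 i q)
    show ?thesis
    proof (cases rule: cy)
      case N2
      have "total_adj EE (hh y) (hh x)" using ad by (rule tadj_sym)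
      then have "Hadj y x" using N2 V1 NV by (simp only: hh.simps(1) hh_even)
      then show ?thesis using Hadj_sym by blast
    next
      case (V2 j r) then show ?thesis using ad V1 VV' by (simp only: hh_even)
    next
      case (E2 j r) then show ?thesis using ad V1 VE by (simp only: hh_even hh_odd)
    qed
  next
    case (E1 i q)
    show ?thesis
    proof (cases rule: cy)
      case N2
      have "total_adj EE (hh y) (hh x)" using ad by (rule tadj_sym)
      then have "Hadj y x" using N2 E1 NE by (simp only: hh.simps(1) hh_odd)
      then show ?thesis using Hadj_sym by blast
    next
      case (V2 j r)
      have "total_adj EE (hh y) (hh x)" using ad by (rule tadj_sym)
      then have "Hadj y x" using V2 E1 VE by (simp only: hh_even hh_odd)
      then show ?thesis using Hadj_sym by blast
    next
      case (E2 j r) then show ?thesis using ad E1 EE' by (simp only: hh_odd)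
    qed
  qed
qed

lemma spider_main:
  assumes "3 \<le> k" "m + 1 \<le> k"
  shows "equitably_choosable (total_vertices VV EE) (total_adj EE) k"
proof (rule transfer[OF H_main[OF assms, of Lf]])
  show "bij_betw hh (HW m Lf) (total_vertices VV EE)"
    using hh_inj hh_img by (simp add: bij_betw_def)
  show "\<forall>x\<in>HW m Lf. \<forall>y\<in>HW m Lf. total_adj EE (hh x) (hh y) \<longrightarrow> Hadj x y"
    using adj_ord by blast
  show "finite (HW m Lf)" by (rule HW_finite)
qed

end

theorem theorem1p5:
  fixes V :: "'a set" and E :: "'a set set" and m :: nat
  assumes "star_subdivision V E m"
  shows "(m = 1 \<longrightarrow> (\<forall>k\<ge>3. equitably_choosable (total_vertices V E) (total_adj E) k))
       \<and> (m \<ge> 2 \<longrightarrow> (\<forall>k\<ge>m+1. equitably_choosable (total_vertices V E) (total_adj E) k))"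
proof -
  obtain c P where cP: "\<forall>i<m. distinct (P i) \<and> length (P i) \<ge> 2 \<and> hd (P i) = c"
    "\<forall>i<m. \<forall>j<m. i \<noteq> j \<longrightarrow> set (P i) \<inter> set (P j) = {c}"
    "V = insert c (\<Union>i<m. set (P i))" "E = (\<Union>i<m. path_edges (P i))"
    using assms unfolding star_subdivision_def by blast
  interpret sp: spider m c P using cP(1,2) by unfold_locales
  have VE: "V = sp.VV" "E = sp.EE" using cP(3,4) by (simp_all add: sp.VV_def sp.EE_def)
  have main: "\<And>k. 3 \<le> k \<Longrightarrow> m + 1 \<le> k \<Longrightarrow> equitably_choosable (total_vertices V E) (total_adj E) k"
    unfolding VE by (rule sp.spider_main)
  show ?thesis using main by auto
qed



end
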